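(* Let $v,z$ be independent $\mathcal{CN}(0,1)$ random variables, let $V>\frac{1}{\sqrt2}$, and define $u=\min(|v|,V)\,\frac{v}{|v|}$. Let $\rho\in\mathbb{C}$ with $|\rho|\in(0,1]$ and $\bar\rho=\sqrt{1-|\rho|^2}$. Then for every $a>0$, $$\mathbb{P}\big(|\rho u+\bar\rho z|>a\big)\ge \mathbb{P}\big(|v|>a\big)-2Ve^{-V^2}.$$
   Context: $\mathcal{CN}(0,1)$ denotes the circularly-symmetric complex Gaussian distribution with zero mean and unit variance. *)

theory Defs
  imports "HOL-Probability.Probability"
begin

definition cgauss_density :: "complex \<Rightarrow> real" where
  "cgauss_density z = exp (- (cmod z)\<^sup>2) / pi"

definition (in prob_space) std_complex_gaussian :: "('a \<Rightarrow> complex) \<Rightarrow> bool" where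
  "std_complex_gaussian X \<longleftrightarrow> distributed M lborel X (\<lambda>x. ennreal (cgauss_density x))"

end

theory Submission
  imports Defs
begin

lemma nn_trans_c:
  fixes f :: "complex \<Rightarrow> ennreal" and c :: complex
  assumes [measurable]: "f \<in> borel_measurable borel"
  shows "(\<integral>\<^sup>+x. f (c + x) \<partial>lborel) = (\<integral>\<^sup>+x. f x \<partial>lborel)"
proof -
  have "(\<integral>\<^sup>+x. f x \<partial>lborel) = (\<integral>\<^sup>+x. f x \<partial>(distr lborel borel ((+) c)))"
    by (simp add: lborel_distr_plus)
  also have "\<dots> = (\<integral>\<^sup>+x. f (c + x) \<partial>lborel)"
    by (subst nn_integral_distr) auto
  finally show ?thesis ..
qed

lemma nn_scale_c:
  fixes f :: "complex \<Rightarrow> ennreal" and c :: real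
  assumes [measurable]: "f \<in> borel_measurable borel" and c: "c \<noteq> 0"
  shows "(\<integral>\<^sup>+x. f x \<partial>lborel) = ennreal (c^2) * (\<integral>\<^sup>+x. f (c *\<^sub>R x) \<partial>lborel)"
proof -
  have "(\<integral>\<^sup>+x. f x \<partial>lborel) = (\<integral>\<^sup>+x. f x \<partial>density (distr lborel borel (\<lambda>x. 0 + c *\<^sub>R x)) (\<lambda>_. \<bar>c\<bar>^DIM(complex)))"
    using lborel_affine[OF c, of "0::complex"] by simp
  also have "\<dots> = ennreal (c^2) * (\<integral>\<^sup>+x. f (c *\<^sub>R x) \<partial>lborel)"
    by (subst nn_integral_density) (auto simp: nn_integral_distr nn_integral_cmult)
  finally show ?thesis .
qed

lemma exp_int0: "(\<integral>\<^sup>+t. indicator {0..} t * ennreal (exp (- t)) \<partial>lborel) = 1"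
proof -
  have "(\<integral>\<^sup>+ x. ennreal (erlang_density 0 1 x * x ^ 0) \<partial>lborel) = 1"
    using nn_integral_erlang_ith_moment[of 1 0 0] by simp
  moreover have "(\<lambda>x. ennreal (erlang_density 0 1 x * x ^ 0)) = (\<lambda>t. indicator {0..} t * ennreal (exp (- t)))"
    by (auto simp: erlang_density_def fun_eq_iff split: split_indicator)
  ultimately show ?thesis by simp
qed

lemma exp_int1: "(\<integral>\<^sup>+t. indicator {0..} t * ennreal (exp (- t) * t) \<partial>lborel) = 1"
proof -
  have "(\<integral>\<^sup>+ x. ennreal (erlang_density 0 1 x * x ^ 1) \<partial>lborel) = 1"
    using nn_integral_erlang_ith_moment[of 1 0 1] by simp
  moreover have "(\<lambda>x. ennreal (erlang_density 0 1 x * x ^ 1)) = (\<lambda>t. indicator {0..} t * ennreal (exp (- t) * t))"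
    by (auto simp: erlang_density_def fun_eq_iff split: split_indicator)
  ultimately show ?thesis by simp
qed

lemma nn_trans_r:
  fixes f :: "real \<Rightarrow> ennreal" and c :: real
  assumes [measurable]: "f \<in> borel_measurable borel"
  shows "(\<integral>\<^sup>+x. f (c + x) \<partial>lborel) = (\<integral>\<^sup>+x. f x \<partial>lborel)"
  using nn_integral_real_affine[OF assms, of 1 c] by simp

lemma exp_tail: "(\<integral>\<^sup>+s. indicator {c..} s * ennreal (exp (- s)) \<partial>lborel) = ennreal (exp (- c))"
proof -
  have "(\<integral>\<^sup>+s. indicator {c..} s * ennreal (exp (- s)) \<partial>lborel)
      = (\<integral>\<^sup>+t. indicator {c..} (c + t) * ennreal (exp (- (c + t))) \<partial>lborel)"
    by (rule nn_trans_r[symmetric]) measurable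
  also have "\<dots> = (\<integral>\<^sup>+t. ennreal (exp (- c)) * (indicator {0..} t * ennreal (exp (- t))) \<partial>lborel)"
    by (intro nn_integral_cong) (auto simp: exp_add[symmetric] ennreal_mult[symmetric] split: split_indicator)
  also have "\<dots> = ennreal (exp (- c))"
    by (subst nn_integral_cmult) (auto simp: exp_int0)
  finally show ?thesis .
qed

lemma exp_tail1: "(\<integral>\<^sup>+s. indicator {c..} s * ennreal (exp (- s) * (s - c)) \<partial>lborel) = ennreal (exp (- c))"
proof -
  have "(\<integral>\<^sup>+s. indicator {c..} s * ennreal (exp (- s) * (s - c)) \<partial>lborel)
      = (\<integral>\<^sup>+t. indicator {c..} (c + t) * ennreal (exp (- (c + t)) * ((c + t) - c)) \<partial>lborel)"
    by (rule nn_trans_r[symmetric]) measurable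
  also have "\<dots> = (\<integral>\<^sup>+t. ennreal (exp (- c)) * (indicator {0..} t * ennreal (exp (- t) * t)) \<partial>lborel)"
    by (intro nn_integral_cong) (auto simp: exp_add[symmetric] ennreal_mult[symmetric] split: split_indicator)
  also have "\<dots> = ennreal (exp (- c))"
    by (subst nn_integral_cmult) (auto simp: exp_int1)
  finally show ?thesis .
qed

lemma emeasure_annulus:
  assumes V: "V \<ge> 0"
  shows "emeasure lborel {x::complex. V < cmod x \<and> (cmod x)\<^sup>2 \<le> s} = indicator {V\<^sup>2..} s * ennreal (pi * (s - V\<^sup>2))"
proof (cases "V\<^sup>2 \<le> s")
  case True
  have s0: "s \<ge> 0" using True by (smt (verit) zero_le_power2)
  hence s: "s \<ge> 0" "V \<le> sqrt s" using V True by (auto intro: real_le_rsqrt)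
  have eq: "{x::complex. V < cmod x \<and> (cmod x)\<^sup>2 \<le> s} = cball 0 (sqrt s) - cball 0 V"
    using s V by (auto simp: real_le_rsqrt real_sqrt_le_iff' real_le_lsqrt)
      (metis norm_ge_zero power_mono real_sqrt_pow2)
  have "emeasure lborel (cball (0::complex) (sqrt s) - cball 0 V) = emeasure lborel (cball (0::complex) (sqrt s)) - emeasure lborel (cball (0::complex) V)"
    by (rule emeasure_Diff) (use s in \<open>auto simp: emeasure_cball V\<close>)
  also have "\<dots> = ennreal (pi * s) - ennreal (pi * V\<^sup>2)"
    using s V by (simp add: emeasure_cball unit_ball_vol_2)
  also have "\<dots> = ennreal (pi * (s - V\<^sup>2))"
    using True by (subst ennreal_minus) (auto simp: algebra_simps)
  finally show ?thesis using True eq by simp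
next
  case False
  have e: "{x::complex. V < cmod x \<and> (cmod x)\<^sup>2 \<le> s} = {}"
  proof (auto)
    fix x :: complex assume "V < cmod x" "(cmod x)\<^sup>2 \<le> s"
    moreover have "V\<^sup>2 < (cmod x)\<^sup>2" using V \<open>V < cmod x\<close> by (intro power_strict_mono) auto
    ultimately show False using False by simp
  qed
  show ?thesis using False by (subst e) simp
qed

lemma gauss_tail:
  assumes V: "V \<ge> 0"
  shows "(\<integral>\<^sup>+x. ennreal (exp (- (cmod x)\<^sup>2)) * indicator {x. V < cmod x} x \<partial>(lborel::complex measure))
     = ennreal (pi * exp (- V\<^sup>2))"
proof -
  define h where "h = (\<lambda>(x::complex, s::real). indicator {x. V < cmod x \<and> (cmod x)\<^sup>2 \<le> s} x * ennreal (exp (- s)))"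
  have hm[measurable]: "h \<in> borel_measurable (lborel \<Otimes>\<^sub>M lborel)"
    unfolding h_def by measurable
  have "(\<integral>\<^sup>+x. ennreal (exp (- (cmod x)\<^sup>2)) * indicator {x. V < cmod x} x \<partial>(lborel::complex measure))
     = (\<integral>\<^sup>+x. (\<integral>\<^sup>+s. h (x, s) \<partial>lborel) \<partial>lborel)"
  proof (intro nn_integral_cong)
    fix x :: complex
    show "ennreal (exp (- (cmod x)\<^sup>2)) * indicator {x. V < cmod x} x = (\<integral>\<^sup>+s. h (x, s) \<partial>lborel)"
    proof (cases "V < cmod x")
      case True
      have "(\<integral>\<^sup>+s. h (x, s) \<partial>lborel) = (\<integral>\<^sup>+s. indicator {(cmod x)\<^sup>2..} s * ennreal (exp (- s)) \<partial>lborel)"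
        using True by (intro nn_integral_cong) (auto simp: h_def split: split_indicator)
      then show ?thesis using True by (simp add: exp_tail)
    next
      case False
      then show ?thesis by (simp add: h_def)
    qed
  qed
  also have "\<dots> = (\<integral>\<^sup>+s. (\<integral>\<^sup>+x. h (x, s) \<partial>lborel) \<partial>lborel)"
    by (rule lborel_pair.Fubini'[symmetric]) simp
  also have "\<dots> = (\<integral>\<^sup>+s. ennreal pi * (indicator {V\<^sup>2..} s * ennreal (exp (- s) * (s - V\<^sup>2))) \<partial>lborel)"
  proof (intro nn_integral_cong)
    fix s :: real
    have "(\<integral>\<^sup>+x. h (x, s) \<partial>lborel) = (\<integral>\<^sup>+x. ennreal (exp (- s)) * indicator {x. V < cmod x \<and> (cmod x)\<^sup>2 \<le> s} x \<partial>lborel)"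
      by (intro nn_integral_cong) (auto simp: h_def mult.commute)
    also have "\<dots> = ennreal (exp (- s)) * emeasure lborel {x::complex. V < cmod x \<and> (cmod x)\<^sup>2 \<le> s}"
      by (rule nn_integral_cmult_indicator) measurable
    also have "\<dots> = ennreal pi * (indicator {V\<^sup>2..} s * ennreal (exp (- s) * (s - V\<^sup>2)))"
      using V by (auto simp: emeasure_annulus ennreal_mult[symmetric] split: split_indicator)
    finally show "(\<integral>\<^sup>+x. h (x, s) \<partial>lborel) = ennreal pi * (indicator {V\<^sup>2..} s * ennreal (exp (- s) * (s - V\<^sup>2)))" .
  qed
  also have "\<dots> = ennreal pi * ennreal (exp (- V\<^sup>2))"
    by (subst nn_integral_cmult) (auto simp: exp_tail1)
  also have "\<dots> = ennreal (pi * exp (- V\<^sup>2))"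
    by (simp add: ennreal_mult)
  finally show ?thesis .
qed

lemma gauss_total:
  "(\<integral>\<^sup>+x. ennreal (exp (- (cmod x)\<^sup>2)) \<partial>(lborel::complex measure)) = ennreal pi"
proof -
  have "(\<integral>\<^sup>+x. ennreal (exp (- (cmod x)\<^sup>2)) \<partial>(lborel::complex measure))
      = (\<integral>\<^sup>+x. ennreal (exp (- (cmod x)\<^sup>2)) * indicator {x. 0 < cmod x} x \<partial>(lborel::complex measure))"
    by (intro nn_integral_cong_AE)
       (use AE_lborel_singleton[of "0::complex"] in \<open>auto elim!: eventually_mono split: split_indicator\<close>)
  also have "\<dots> = ennreal pi"
    using gauss_tail[of 0] by simp
  finally show ?thesis .
qed

lemma gauss_shift_scale:
  fixes \<gamma> :: complex and k :: real
  assumes k: "k > 0"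
  shows "(\<integral>\<^sup>+y. ennreal (exp (- (k * (cmod (y - \<gamma>))\<^sup>2))) \<partial>lborel) = ennreal (pi / k)"
proof -
  have "(\<integral>\<^sup>+y. ennreal (exp (- (k * (cmod (y - \<gamma>))\<^sup>2))) \<partial>lborel)
      = (\<integral>\<^sup>+y. ennreal (exp (- (k * (cmod ((\<gamma> + y) - \<gamma>))\<^sup>2))) \<partial>lborel)"
    by (rule nn_trans_c[symmetric]) measurable
  also have "\<dots> = (\<integral>\<^sup>+y. ennreal (exp (- k * (cmod y)\<^sup>2)) \<partial>lborel)"
    by simp
  also have "\<dots> = ennreal ((1 / sqrt k)^2) * (\<integral>\<^sup>+y. ennreal (exp (- k * (cmod ((1 / sqrt k) *\<^sub>R y))\<^sup>2)) \<partial>lborel)"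
    by (rule nn_scale_c) (use k in auto)
  also have "(\<lambda>y. ennreal (exp (- k * (cmod ((1 / sqrt k) *\<^sub>R y))\<^sup>2))) = (\<lambda>y. ennreal (exp (- (cmod y)\<^sup>2)))"
    using k by (auto simp: fun_eq_iff power_mult_distrib power_divide)
  also have "ennreal ((1 / sqrt k)^2) * (\<integral>\<^sup>+y. ennreal (exp (- (cmod y)\<^sup>2)) \<partial>lborel) = ennreal (pi / k)"
    using k by (simp add: gauss_total ennreal_mult[symmetric] power_divide)
  finally show ?thesis .
qed

lemma quad_identity:
  fixes x y \<beta> :: complex
  defines "k \<equiv> 1 + (cmod \<beta>)\<^sup>2"
  shows "(cmod y)\<^sup>2 + (cmod (x - \<beta> * y))\<^sup>2 = k * (cmod (y - x * cnj \<beta> / k))\<^sup>2 + (cmod x)\<^sup>2 / k"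
proof -
  have k: "k > 0" unfolding k_def by (simp add: add_pos_nonneg)
  obtain x1 x2 where x: "x = Complex x1 x2" by (cases x)
  obtain y1 y2 where y: "y = Complex y1 y2" by (cases y)
  obtain b1 b2 where b: "\<beta> = Complex b1 b2" by (cases \<beta>)
  have kk: "k = 1 + b1^2 + b2^2" unfolding k_def b by (simp add: cmod_power2)
  have e: "x * cnj \<beta> / k = Complex ((x1*b1 + x2*b2)/k) ((x2*b1 - x1*b2)/k)"
    unfolding x b using k by (simp add: Complex_eq field_simps complex_eq_iff)
  define P where "P = x1*b1 + x2*b2"
  define Q where "Q = x2*b1 - x1*b2"
  have L: "(cmod y)\<^sup>2 + (cmod (x - \<beta> * y))\<^sup>2 = y1^2 + y2^2 + (x1 - (b1*y1 - b2*y2))^2 + (x2 - (b1*y2 + b2*y1))^2"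
    unfolding x y b by (simp add: cmod_power2)
  have R: "k * (cmod (y - x * cnj \<beta> / k))\<^sup>2 + (cmod x)\<^sup>2 / k = ((k*y1 - P)^2 + (k*y2 - Q)^2 + x1^2 + x2^2) / k"
  proof -
    have h1: "(cmod (y - x * cnj \<beta> / k))\<^sup>2 = (y1 - P/k)^2 + (y2 - Q/k)^2"
      unfolding cmod_power2 x y b P_def Q_def by (simp add: algebra_simps Re_divide_of_real Im_divide_of_real add_divide_distrib diff_divide_distrib)
    have h2: "(cmod x)\<^sup>2 = x1^2 + x2^2" unfolding x by (simp add: cmod_power2)
    show ?thesis unfolding h1 h2 using k by (simp add: field_simps power2_eq_square)
  qed
  have poly: "k * (y1^2 + y2^2 + (x1 - (b1*y1 - b2*y2))^2 + (x2 - (b1*y2 + b2*y1))^2) = (k*y1 - P)^2 + (k*y2 - Q)^2 + x1^2 + x2^2"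
    unfolding kk P_def Q_def by algebra
  show ?thesis unfolding L R using k poly by (simp add: field_simps)
qed

lemma gauss_conv:
  fixes x \<beta> :: complex
  defines "k \<equiv> 1 + (cmod \<beta>)\<^sup>2"
  shows "(\<integral>\<^sup>+y. ennreal (cgauss_density y * cgauss_density (x - \<beta> * y)) \<partial>lborel)
       = ennreal (exp (- (cmod x)\<^sup>2 / k) / (pi * k))"
proof -
  have k: "k > 0" unfolding k_def by (simp add: add_pos_nonneg)
  define \<gamma> where "\<gamma> = x * cnj \<beta> / k"
  have "(\<integral>\<^sup>+y. ennreal (cgauss_density y * cgauss_density (x - \<beta> * y)) \<partial>lborel)
      = (\<integral>\<^sup>+y. ennreal (exp (- (cmod x)\<^sup>2 / k) / pi^2) * ennreal (exp (- k * (cmod (y - \<gamma>))\<^sup>2)) \<partial>lborel)"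
  proof (intro nn_integral_cong)
    fix y
    have "cgauss_density y * cgauss_density (x - \<beta> * y) = exp (- ((cmod y)\<^sup>2 + (cmod (x - \<beta> * y))\<^sup>2)) / pi^2"
      by (simp add: cgauss_density_def exp_add[symmetric] power2_eq_square)
    also have "\<dots> = exp (- (cmod x)\<^sup>2 / k) / pi^2 * exp (- k * (cmod (y - \<gamma>))\<^sup>2)"
    proof -
      have "- ((cmod y)\<^sup>2 + (cmod (x - \<beta> * y))\<^sup>2) = - (cmod x)\<^sup>2 / k + - k * (cmod (y - \<gamma>))\<^sup>2"
        using quad_identity[of y x \<beta>] unfolding \<gamma>_def k_def by (simp; simp add: algebra_simps)
      then show ?thesis by (simp add: exp_add[symmetric])
    qed
    finally show "ennreal (cgauss_density y * cgauss_density (x - \<beta> * y)) = ennreal (exp (- (cmod x)\<^sup>2 / k) / pi^2) * ennreal (exp (- k * (cmod (y - \<gamma>))\<^sup>2))"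
      by (simp add: ennreal_mult[symmetric])
  qed
  also have "\<dots> = ennreal (exp (- (cmod x)\<^sup>2 / k) / pi^2) * ennreal (pi / k)"
    by (subst nn_integral_cmult) (auto simp: gauss_shift_scale k)
  also have "\<dots> = ennreal (exp (- (cmod x)\<^sup>2 / k) / (pi * k))"
    using k by (simp add: ennreal_mult[symmetric] power2_eq_square field_simps)
  finally show ?thesis .
qed

lemma cgauss_meas[measurable]: "cgauss_density \<in> borel_measurable borel"
  unfolding cgauss_density_def[abs_def] by measurable

lemma main_analytic:
  fixes \<rho> :: complex and a :: real
  assumes r0: "0 < cmod \<rho>" and r1: "cmod \<rho> \<le> 1"
  defines "s \<equiv> sqrt (1 - (cmod \<rho>)\<^sup>2)"
  shows "(\<integral>\<^sup>+y. (\<integral>\<^sup>+x. ennreal (cgauss_density x) * ennreal (cgauss_density y) *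
             indicator {x. a < cmod (\<rho> * x + complex_of_real s * y)} x \<partial>lborel) \<partial>lborel)
       = (\<integral>\<^sup>+x. ennreal (cgauss_density x) * indicator {x. a < cmod x} x \<partial>lborel)"
proof -
  define r where "r = cmod \<rho>"
  have r: "r > 0" "r \<le> 1" using r0 r1 by (auto simp: r_def)
  have \<rho>0: "\<rho> \<noteq> 0" using r0 by auto
  define \<beta> where "\<beta> = complex_of_real s / \<rho>"
  define t where "t = a / r"
  define k where "k = 1 + (cmod \<beta>)\<^sup>2"
  have h1: "(cmod \<rho>)^2 \<le> 1" using r0 r1 by (intro power_le_one) auto
  hence s2: "s^2 = 1 - r^2" unfolding s_def r_def by (intro real_sqrt_pow2) linarith
  have s0: "s \<ge> 0" unfolding s_def using h1 by simp
  have kr: "k = 1 / r^2"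
    unfolding k_def \<beta>_def using r s0 s2 by (simp add: norm_divide r_def[symmetric] power_divide field_simps)
  have k0: "k > 0" unfolding kr using r by simp
  have ev: "a < cmod (\<rho> * x + complex_of_real s * y) \<longleftrightarrow> t < cmod (x + \<beta> * y)" for x y
  proof -
    have "\<rho> * x + complex_of_real s * y = \<rho> * (x + \<beta> * y)" using \<rho>0 unfolding \<beta>_def by (simp add: field_simps)
    hence "cmod (\<rho> * x + complex_of_real s * y) = r * cmod (x + \<beta> * y)" by (simp add: norm_mult r_def)
    thus ?thesis unfolding t_def using r by (simp add: field_simps)
  qed
  have "(\<integral>\<^sup>+y. (\<integral>\<^sup>+x. ennreal (cgauss_density x) * ennreal (cgauss_density y) *
             indicator {x. a < cmod (\<rho> * x + complex_of_real s * y)} x \<partial>lborel) \<partial>lborel)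
     = (\<integral>\<^sup>+y. (\<integral>\<^sup>+x. ennreal (cgauss_density y * cgauss_density (x - \<beta> * y)) * indicator {x. t < cmod x} x \<partial>lborel) \<partial>lborel)"
  proof (rule nn_integral_cong)
    fix y
    have "(\<integral>\<^sup>+x. ennreal (cgauss_density y * cgauss_density (x - \<beta> * y)) * indicator {x. t < cmod x} x \<partial>lborel)
        = (\<integral>\<^sup>+x. ennreal (cgauss_density y * cgauss_density ((\<beta> * y + x) - \<beta> * y)) * indicator {x. t < cmod x} (\<beta> * y + x) \<partial>lborel)"
      by (rule nn_trans_c[symmetric]) measurable
    also have "\<dots> = (\<integral>\<^sup>+x. ennreal (cgauss_density x) * ennreal (cgauss_density y) *
             indicator {x. a < cmod (\<rho> * x + complex_of_real s * y)} x \<partial>lborel)"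
    proof (rule nn_integral_cong)
      fix x
      have g0: "cgauss_density z \<ge> 0" for z by (simp add: cgauss_density_def)
      have "indicator {x. t < cmod x} (\<beta> * y + x) = (indicator {x. a < cmod (\<rho> * x + complex_of_real s * y)} x :: ennreal)"
        using ev[of x y] by (simp add: add.commute split: split_indicator)
      moreover have "ennreal (cgauss_density y * cgauss_density ((\<beta> * y + x) - \<beta> * y)) = ennreal (cgauss_density x) * ennreal (cgauss_density y)"
        using g0 by (simp add: ennreal_mult[symmetric] mult.commute)
      ultimately show "ennreal (cgauss_density y * cgauss_density ((\<beta> * y + x) - \<beta> * y)) * indicator {x. t < cmod x} (\<beta> * y + x) = ennreal (cgauss_density x) * ennreal (cgauss_density y) *
             indicator {x. a < cmod (\<rho> * x + complex_of_real s * y)} x" by simp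
    qed
    finally show "(\<integral>\<^sup>+x. ennreal (cgauss_density x) * ennreal (cgauss_density y) *
             indicator {x. a < cmod (\<rho> * x + complex_of_real s * y)} x \<partial>lborel) = 
          (\<integral>\<^sup>+x. ennreal (cgauss_density y * cgauss_density (x - \<beta> * y)) * indicator {x. t < cmod x} x \<partial>lborel)" by (rule sym)
  qed
  also have "\<dots> = (\<integral>\<^sup>+x. (\<integral>\<^sup>+y. ennreal (cgauss_density y * cgauss_density (x - \<beta> * y)) * indicator {x. t < cmod x} x \<partial>lborel) \<partial>lborel)"
    by (rule lborel_pair.Fubini') measurable
  also have "\<dots> = (\<integral>\<^sup>+x. ennreal (exp (- (cmod x)\<^sup>2 / k) / (pi * k)) * indicator {x. t < cmod x} x \<partial>lborel)"
    by (rule nn_integral_cong) (simp add: nn_integral_multc gauss_conv k_def)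
  also have "\<dots> = ennreal ((1/r)^2) * (\<integral>\<^sup>+x. ennreal (exp (- (cmod ((1/r) *\<^sub>R x))\<^sup>2 / k) / (pi * k)) * indicator {x. t < cmod x} ((1/r) *\<^sub>R x) \<partial>lborel)"
    by (rule nn_scale_c) (use r in auto)
  also have "\<dots> = (\<integral>\<^sup>+x. ennreal (cgauss_density x) * indicator {x. a < cmod x} x \<partial>lborel)"
    apply (subst nn_integral_cmult[symmetric], measurable)
    apply (intro nn_integral_cong)
    using r by (auto simp: kr t_def cgauss_density_def ennreal_mult[symmetric] power_divide field_simps split: split_indicator)
  finally show ?thesis .
qed

theorem lemma3:
  fixes M :: "'a measure" and v z :: "'a \<Rightarrow> complex"
    and V a :: real and \<rho> :: complex
  assumes "prob_space M"
    and "prob_space.std_complex_gaussian M v"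
    and "prob_space.std_complex_gaussian M z"
    and "prob_space.indep_var M borel v borel z"
    and "V > 1 / sqrt 2"
    and "0 < cmod \<rho>" and "cmod \<rho> \<le> 1"
    and "a > 0"
  shows "measure M {\<omega> \<in> space M.
            cmod (\<rho> * (complex_of_real (min (cmod (v \<omega>)) V) * (v \<omega> / complex_of_real (cmod (v \<omega>))))
                  + complex_of_real (sqrt (1 - (cmod \<rho>)\<^sup>2)) * z \<omega>) > a}
         \<ge> measure M {\<omega> \<in> space M. cmod (v \<omega>) > a} - 2 * V * exp (- V\<^sup>2)"
proof -
  interpret prob_space M by fact
  define s where "s = sqrt (1 - (cmod \<rho>)\<^sup>2)"
  define g where "g = (\<lambda>x. ennreal (cgauss_density x))"
  have dv: "distributed M lborel v g" using assms(2) unfolding std_complex_gaussian_def g_def .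
  have dz: "distributed M lborel z g" using assms(3) unfolding std_complex_gaussian_def g_def .
  have vm[measurable]: "v \<in> borel_measurable M" using distributed_measurable[OF dv] by simp
  have zm[measurable]: "z \<in> borel_measurable M" using distributed_measurable[OF dz] by simp
  have ind: "distr M borel v \<Otimes>\<^sub>M distr M borel z = distr M (borel \<Otimes>\<^sub>M borel) (\<lambda>x. (v x, z x))"
    using assms(4) indep_var_distribution_eq by blast
  have ind': "distr M lborel v \<Otimes>\<^sub>M distr M lborel z = distr M (lborel \<Otimes>\<^sub>M lborel) (\<lambda>x. (v x, z x))"
  proof -
    have "distr M lborel v = distr M borel v" "distr M lborel z = distr M borel z"
      by (auto intro!: distr_cong)
    moreover have "distr M (lborel \<Otimes>\<^sub>M lborel) (\<lambda>x. (v x, z x)) = distr M (borel \<Otimes>\<^sub>M borel) (\<lambda>x. (v x, z x))"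
      by (intro distr_cong sets_pair_measure_cong) auto
    ultimately show ?thesis using ind by simp
  qed
  have joint: "distributed M (lborel \<Otimes>\<^sub>M lborel) (\<lambda>x. (v x, z x)) (\<lambda>(x, y). g x * g y)"
    by (rule distributed_joint_indep'[OF _ _ dv dz ind']) (auto intro: sigma_finite_lborel)
  define Ew where "Ew = {\<omega> \<in> space M. a < cmod (\<rho> * v \<omega> + complex_of_real s * z \<omega>)}"
  define Ev where "Ev = (\<lambda>t. {\<omega> \<in> space M. t < cmod (v \<omega>)})"
  define T where "T = {\<omega> \<in> space M.
            cmod (\<rho> * (complex_of_real (min (cmod (v \<omega>)) V) * (v \<omega> / complex_of_real (cmod (v \<omega>))))
                  + complex_of_real s * z \<omega>) > a}"
  have [measurable]: "Ew \<in> sets M" "T \<in> sets M" "Ev t \<in> sets M" for t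
    unfolding Ew_def T_def Ev_def by measurable
  have Ev_eq: "emeasure M (Ev t) = (\<integral>\<^sup>+x. ennreal (cgauss_density x) * indicator {x. t < cmod x} x \<partial>lborel)" for t
  proof -
    have "Ev t = v -` {x. t < cmod x} \<inter> space M" unfolding Ev_def by auto
    thus ?thesis using distributed_emeasure[OF dv, of "{x. t < cmod x}"] by (simp add: g_def)
  qed
  have Ew_eq: "emeasure M Ew = emeasure M (Ev a)"
  proof -
    have Ewp: "Ew = (\<lambda>x. (v x, z x)) -` {p. a < cmod (\<rho> * fst p + complex_of_real s * snd p)} \<inter> space M"
      unfolding Ew_def by auto
    hence "emeasure M Ew = (\<integral>\<^sup>+p. (case p of (x, y) \<Rightarrow> g x * g y) * indicator {p. a < cmod (\<rho> * fst p + complex_of_real s * snd p)} p \<partial>(lborel \<Otimes>\<^sub>M lborel))"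
    proof -
      have "{p \<in> space (lborel \<Otimes>\<^sub>M lborel). a < cmod (\<rho> * fst p + complex_of_real s * snd p)} \<in> sets (lborel \<Otimes>\<^sub>M lborel)"
        by measurable
      hence "{p. a < cmod (\<rho> * fst p + complex_of_real s * snd p)} \<in> sets (lborel \<Otimes>\<^sub>M lborel)"
        by (simp add: space_pair_measure)
      from distributed_emeasure[OF joint this] show ?thesis using Ewp by simp
    qed
    also have "\<dots> = (\<integral>\<^sup>+y. (\<integral>\<^sup>+x. ennreal (cgauss_density x) * ennreal (cgauss_density y) *
             indicator {x. a < cmod (\<rho> * x + complex_of_real s * y)} x \<partial>lborel) \<partial>lborel)"
      by (subst lborel_pair.nn_integral_snd[symmetric]) (auto simp: g_def split: split_indicator intro!: nn_integral_cong)
    also have "\<dots> = (\<integral>\<^sup>+x. ennreal (cgauss_density x) * indicator {x. a < cmod x} x \<partial>lborel)"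
      unfolding s_def using assms(6,7) by (rule main_analytic)
    finally show ?thesis using Ev_eq by simp
  qed
  have EV_eq: "emeasure M (Ev V) = ennreal (exp (- V\<^sup>2))"
  proof -
    have "1 / sqrt 2 > (0::real)" by simp
    hence V0: "V \<ge> 0" using assms(5) by linarith
    have "emeasure M (Ev V) = (\<integral>\<^sup>+x. ennreal (1 / pi) * (ennreal (exp (- (cmod x)\<^sup>2)) * indicator {x. V < cmod x} x) \<partial>lborel)"
      unfolding Ev_eq
    proof (rule nn_integral_cong)
      fix x :: complex
      have "ennreal (exp (- (cmod x)\<^sup>2) / pi) = ennreal (1 / pi) * ennreal (exp (- (cmod x)\<^sup>2))"
        by (simp add: ennreal_mult[symmetric])
      then show "ennreal (cgauss_density x) * indicator {x. V < cmod x} x = ennreal (1 / pi) * (ennreal (exp (- (cmod x)\<^sup>2)) * indicator {x. V < cmod x} x)"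
        unfolding cgauss_density_def by (simp add: mult.assoc)
    qed
    also have "\<dots> = ennreal (1 / pi) * ennreal (pi * exp (- V\<^sup>2))"
      by (subst nn_integral_cmult) (auto simp: gauss_tail V0)
    also have "\<dots> = ennreal (exp (- V\<^sup>2))"
      by (simp add: ennreal_mult[symmetric])
    finally show ?thesis .
  qed
  have m1: "measure M Ew = measure M (Ev a)" using Ew_eq by (simp add: emeasure_eq_measure)
  have m2: "measure M (Ev V) = exp (- V\<^sup>2)" using EV_eq by (simp add: emeasure_eq_measure)
  have sub: "Ew \<subseteq> T \<union> Ev V"
  proof
    fix \<omega> assume w: "\<omega> \<in> Ew"
    show "\<omega> \<in> T \<union> Ev V"
    proof (cases "cmod (v \<omega>) \<le> V")
      case True
      have "complex_of_real (min (cmod (v \<omega>)) V) * (v \<omega> / complex_of_real (cmod (v \<omega>))) = v \<omega>"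
        using True by (cases "v \<omega> = 0") (auto simp: min_def)
      then show ?thesis using w True unfolding Ew_def T_def by auto
    next
      case False
      then show ?thesis using w unfolding Ew_def Ev_def by auto
    qed
  qed
  have "measure M Ew \<le> measure M (T \<union> Ev V)" using sub by (intro finite_measure_mono) auto
  also have "\<dots> \<le> measure M T + measure M (Ev V)" by (rule measure_Un_le) auto
  finally have "measure M (Ev a) \<le> measure M T + exp (- V\<^sup>2)" using m1 m2 by simp
  moreover have "exp (- V\<^sup>2) \<le> 2 * V * exp (- V\<^sup>2)"
  proof -
    have s2: "sqrt 2 < (2::real)" by (rule sqrt2_less_2)
    have "1 / sqrt 2 > (0::real)" by simp
    hence V0: "V > 0" using assms(5) by linarith
    have "1 < V * sqrt 2" using assms(5) by (simp add: field_simps)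
    also have "\<dots> \<le> V * 2" using s2 V0 by (intro mult_left_mono) auto
    finally have "1 \<le> 2 * V" by simp
    thus ?thesis by simp
  qed
  ultimately have "measure M (Ev a) - 2 * V * exp (- V\<^sup>2) \<le> measure M T" by linarith
  then show ?thesis unfolding T_def Ev_def s_def .
qed

end
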